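(* Let $\nu > 0$. For each integer $m \ge 0$ let $(\widetilde S_m(k))_{k \ge 0}$ be a simple symmetric random walk ($\widetilde S_m(0)=0$, increments i.i.d. with $\Pr(\pm 1) = \tfrac12$), and let \[ Y_m = 2^{-2m} \sum_{k=0}^{\infty} \exp\bigl(2^{-m}\widetilde S_m(k) - \nu k 2^{-2m}\bigr). \] If $p$ is a positive integer with $\frac{p}{2} < \nu$, then \[ \lim_{m \to \infty} \mathbb{E}(Y_m^p) = \frac{1}{\prod_{k=1}^p \left(\nu - \frac{k}{2}\right)} < \infty . \] *)

theory Defs
  imports "HOL-Probability.Probability"
begin

definition walk :: "(nat \<Rightarrow> 'a \<Rightarrow> real) \<Rightarrow> nat \<Rightarrow> 'a \<Rightarrow> real" where
  "walk X k \<omega> = (\<Sum>i<k. X i \<omega>)"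

text \<open>Y_m as an extended nonnegative real (the series may diverge for small m).\<close>
definition Ysum :: "real \<Rightarrow> nat \<Rightarrow> (nat \<Rightarrow> 'a \<Rightarrow> real) \<Rightarrow> 'a \<Rightarrow> ennreal" where
  "Ysum \<nu> m X \<omega> = (\<Sum>k. ennreal (2 powr (- 2 * real m) *
       exp (2 powr (- real m) * walk X k \<omega> - \<nu> * real k * 2 powr (- 2 * real m))))"

end

theory Submission
  imports Defs "HOL-Real_Asymp.Real_Asymp"
begin


definition ww :: "real \<Rightarrow> real \<Rightarrow> nat \<Rightarrow> real" where
  "ww h q l = q ^ l * cosh (real l * h)"

fun cc :: "real \<Rightarrow> real \<Rightarrow> nat \<Rightarrow> nat \<Rightarrow> real" where
  "cc h q 0 j = (if j = 0 then 1 else 0)"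
| "cc h q (Suc n) j = (\<Sum>l\<le>j. real (j choose l) * ww h q l * cc h q n l)"

lemma ww_nonneg: "q \<ge> 0 \<Longrightarrow> ww h q l \<ge> 0"
  unfolding ww_def by (simp add: cosh_real_nonneg)

lemma ww0: "ww h q 0 = 1"
  unfolding ww_def by simp

lemma cc_nonneg: "q \<ge> 0 \<Longrightarrow> cc h q n j \<ge> 0"
  by (induction n arbitrary: j) (auto intro!: sum_nonneg mult_nonneg_nonneg ww_nonneg)

lemma cc_0: "cc h q n 0 = 1"
  by (induction n) (auto simp: ww0)

lemma cc_1: "cc h q (Suc 0) j = 1"
proof -
  have "cc h q (Suc 0) j = (\<Sum>l\<le>j. real (j choose l) * ww h q l * cc h q 0 l)" by simp
  also have "\<dots> = (\<Sum>l\<le>j. (if l = 0 then 1 else 0))"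
    by (intro sum.cong refl) (auto simp: ww0)
  also have "\<dots> = 1" by (simp add: sum.delta)
  finally show ?thesis .
qed

lemma cc_mono: "q \<ge> 0 \<Longrightarrow> cc h q n j \<le> cc h q (Suc n) j"
proof (induction n arbitrary: j)
  case 0
  then show ?case by (simp only: cc_1) simp
next
  case (Suc n)
  show ?case
    unfolding cc.simps(2)[of h q "Suc n"] cc.simps(2)[of h q n]
    by (intro sum_mono mult_left_mono Suc mult_nonneg_nonneg ww_nonneg) (use Suc in auto)
qed

lemma cc_incseq: "q \<ge> 0 \<Longrightarrow> incseq (\<lambda>n. cc h q n j)"
  using cc_mono by (simp add: incseq_SucI)

definition Lc :: "real \<Rightarrow> real \<Rightarrow> nat \<Rightarrow> real" where
  "Lc h q j = lim (\<lambda>n. cc h q n j)"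

lemma cc_split: "cc h q (Suc n) j = ww h q j * cc h q n j + (\<Sum>l<j. real (j choose l) * ww h q l * cc h q n l)"
  by (simp add: lessThan_Suc_atMost[symmetric])

lemma cc_conv:
  assumes q: "q \<ge> 0" and w: "\<And>l. 1 \<le> l \<Longrightarrow> l \<le> p \<Longrightarrow> ww h q l < 1"
  shows "j \<le> p \<Longrightarrow> (\<lambda>n. cc h q n j) \<longlonglongrightarrow> Lc h q j"
proof (induction j rule: less_induct)
  case (less j)
  show ?case
  proof (cases "j = 0")
    case True
    then show ?thesis unfolding Lc_def by (simp add: cc_0)
  next
    case False
    have IH: "\<And>l. l < j \<Longrightarrow> (\<lambda>n. cc h q n l) \<longlonglongrightarrow> Lc h q l" using less by auto
    have le: "\<And>l n. l < j \<Longrightarrow> cc h q n l \<le> Lc h q l"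
      using IH incseq_le cc_incseq[OF q] by blast
    define R where "R = (\<Sum>l<j. real (j choose l) * ww h q l * Lc h q l)"
    have R0: "R \<ge> 0" unfolding R_def
      using le[of _ 0] cc_nonneg[OF q, of h 0]
      by (intro sum_nonneg mult_nonneg_nonneg ww_nonneg q) (auto intro: order_trans)
    have wj: "ww h q j < 1" using w False less by auto
    have wj0: "ww h q j \<ge> 0" using ww_nonneg q by auto
    define B where "B = R / (1 - ww h q j)"
    have B0: "B \<ge> 0" unfolding B_def using R0 wj by auto
    have bnd: "cc h q n j \<le> B" for n
    proof (induction n)
      case 0 then show ?case using False B0 by simp
    next
      case (Suc n)
      have "cc h q (Suc n) j \<le> ww h q j * B + R"
        unfolding cc_split R_def
        by (intro add_mono mult_left_mono Suc wj0 sum_mono mult_left_mono le mult_nonneg_nonneg ww_nonneg q) auto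
      also have "\<dots> = B" unfolding B_def using wj by (simp add: field_simps)
      finally show ?case .
    qed
    obtain L where "(\<lambda>n. cc h q n j) \<longlonglongrightarrow> L"
      using incseq_convergent[OF cc_incseq[OF q] allI[OF bnd]] by blast
    then show ?thesis unfolding Lc_def using convergentI convergent_LIMSEQ_iff by blast
  qed
qed

lemma Lc_rec:
  assumes q: "q \<ge> 0" and w: "\<And>l. 1 \<le> l \<Longrightarrow> l \<le> p \<Longrightarrow> ww h q l < 1" and j: "j \<le> p"
  shows "Lc h q j = ww h q j * Lc h q j + (\<Sum>l<j. real (j choose l) * ww h q l * Lc h q l)"
proof -
  have "(\<lambda>n. cc h q (Suc n) j) \<longlonglongrightarrow> Lc h q j"
    using cc_conv[OF q w j] LIMSEQ_Suc by blast
  moreover have "(\<lambda>n. cc h q (Suc n) j) \<longlonglongrightarrow> ww h q j * Lc h q j + (\<Sum>l<j. real (j choose l) * ww h q l * Lc h q l)"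
    unfolding cc_split using j
    by (intro tendsto_intros cc_conv[OF q w]) auto
  ultimately show ?thesis using LIMSEQ_unique by blast
qed

lemma Lc_0: "Lc h q 0 = 1"
  unfolding Lc_def by (simp add: cc_0)



lemma asym: "((\<lambda>x::real. (1 - exp (-a * x^2) * cosh (b*x)) / x^2) \<longlongrightarrow> a - b*b/2) (at_right 0)"
  by real_asymp

lemma ww_exp: "ww h (exp (-\<nu>*h^2)) l = exp (-(real l * \<nu>) * h^2) * cosh (real l * h)"
  unfolding ww_def by (simp add: exp_of_nat_mult[symmetric] mult_ac)

lemma ww_lim: "((\<lambda>h. (1 - ww h (exp (-\<nu>*h^2)) l) / h^2) \<longlongrightarrow> real l * \<nu> - real l * real l / 2) (at_right 0)"
  unfolding ww_exp using asym[of "real l * \<nu>" "real l"] by simp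

lemma ww_lim1: "((\<lambda>h. ww h (exp (-\<nu>*h^2)) l) \<longlongrightarrow> 1) (at_right 0)"
proof -
  have "((\<lambda>h. exp (-(real l * \<nu>) * h^2) * cosh (real l * h)) \<longlongrightarrow> exp (-(real l * \<nu>) * 0^2) * cosh (real l * 0)) (at_right 0)"
    by (intro tendsto_intros)
  then show ?thesis unfolding ww_exp by simp
qed

lemma ev_pos: "eventually (\<lambda>x::real. 0 < x) (at_right 0)"
  by (simp add: eventually_at_filter)

lemma ev_w:
  assumes "real p / 2 < \<nu>"
  shows "eventually (\<lambda>h. \<forall>l\<in>{1..p}. ww h (exp (-\<nu>*h^2)) l < 1) (at_right 0)"
proof (rule eventually_ball_finite, simp, intro ballI)
  fix l assume l: "l \<in> {1..p}"
  have "real l * real l / 2 < real l * \<nu>"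
  proof -
    have "real l / 2 < \<nu>" using l assms by (auto simp: field_simps)
    then show ?thesis using l by (auto simp: field_simps)
  qed
  then have "eventually (\<lambda>h. (1 - ww h (exp (-\<nu>*h^2)) l) / h^2 > 0) (at_right 0)"
    using ww_lim[of \<nu> l] order_tendstoD(1)[of _ "real l * \<nu> - real l * real l / 2"] by force
  then show "eventually (\<lambda>h. ww h (exp (-\<nu>*h^2)) l < 1) (at_right 0)"
    using ev_pos by eventually_elim (auto simp: divide_pos_pos zero_less_divide_iff)
qed

definition AA :: "real \<Rightarrow> real \<Rightarrow> nat \<Rightarrow> real" where
  "AA \<nu> h j = h ^ (2*j) * Lc h (exp (-\<nu>*h^2)) j"

lemma AA_rec:
  assumes w: "\<forall>l\<in>{1..p}. ww h (exp (-\<nu>*h^2)) l < 1" and j: "1 \<le> j" "j \<le> p"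
  shows "AA \<nu> h j = h^2 / (1 - ww h (exp (-\<nu>*h^2)) j) *
     (\<Sum>l<j. real (j choose l) * ww h (exp (-\<nu>*h^2)) l * h^(2*(j-1-l)) * AA \<nu> h l)"
proof -
  let ?q = "exp (-\<nu>*h^2)"
  have wj: "ww h ?q j < 1" using w j by auto
  have "Lc h ?q j = ww h ?q j * Lc h ?q j + (\<Sum>l<j. real (j choose l) * ww h ?q l * Lc h ?q l)"
    by (rule Lc_rec[of _ p]) (use w j in auto)
  then have "Lc h ?q j = (\<Sum>l<j. real (j choose l) * ww h ?q l * Lc h ?q l) / (1 - ww h ?q j)"
    using wj by (simp add: field_simps)
  then have "AA \<nu> h j = (\<Sum>l<j. h^(2*j) * (real (j choose l) * ww h ?q l * Lc h ?q l)) / (1 - ww h ?q j)"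
    unfolding AA_def by (simp add: sum_distrib_left)
  also have "\<dots> = (\<Sum>l<j. h^2 * (real (j choose l) * ww h ?q l * h^(2*(j-1-l)) * AA \<nu> h l)) / (1 - ww h ?q j)"
  proof (intro arg_cong2[where f="(/)"] sum.cong refl)
    fix l assume "l \<in> {..<j}"
    then have "2*j = 2 + 2*(j-1-l) + 2*l" by auto
    then have "h^(2*j) = h^2 * h^(2*(j-1-l)) * h^(2*l)" by (metis power_add)
    then show "h^(2*j) * (real (j choose l) * ww h ?q l * Lc h ?q l) = h^2 * (real (j choose l) * ww h ?q l * h^(2*(j-1-l)) * AA \<nu> h l)"
      unfolding AA_def by (simp add: mult_ac)
  qed
  finally show ?thesis by (simp add: sum_distrib_left[symmetric])
qed

definition PP :: "real \<Rightarrow> nat \<Rightarrow> real" where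
  "PP \<nu> j = 1 / (\<Prod>k=1..j. (\<nu> - real k / 2))"

lemma AA_lim:
  assumes nu: "real p / 2 < \<nu>"
  shows "j \<le> p \<Longrightarrow> ((\<lambda>h. AA \<nu> h j) \<longlongrightarrow> PP \<nu> j) (at_right 0)"
proof (induction j rule: less_induct)
  case (less j)
  show ?case
  proof (cases j)
    case 0
    then show ?thesis unfolding AA_def PP_def by (simp add: Lc_0)
  next
    case (Suc i)
    let ?w = "\<lambda>h l. ww h (exp (-\<nu>*h^2)) l"
    have ev: "eventually (\<lambda>h. AA \<nu> h j = h^2 / (1 - ?w h j) *
       (\<Sum>l<j. real (j choose l) * ?w h l * h^(2*(j-1-l)) * AA \<nu> h l)) (at_right 0)"
      using ev_w[OF nu] by eventually_elim (rule AA_rec[of p], use less Suc in auto)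
    have pos: "real j * \<nu> - real j * real j / 2 \<noteq> 0"
    proof -
      have "real j / 2 < \<nu>" using less nu by (auto simp: field_simps)
      then have "0 < real j * (\<nu> - real j / 2)" using Suc by (intro mult_pos_pos) auto
      then have "0 < real j * \<nu> - real j * real j / 2" by (simp add: algebra_simps)
      then show ?thesis by linarith
    qed
    have l1: "((\<lambda>h. h^2 / (1 - ?w h j)) \<longlongrightarrow> 1 / (real j * \<nu> - real j * real j / 2)) (at_right 0)"
    proof -
      have "((\<lambda>h. 1 / ((1 - ?w h j) / h^2)) \<longlongrightarrow> 1 / (real j * \<nu> - real j * real j / 2)) (at_right 0)"
        by (intro tendsto_divide tendsto_const ww_lim pos)
      then show ?thesis by simp
    qed
    have l2: "((\<lambda>h. \<Sum>l<j. real (j choose l) * ?w h l * h^(2*(j-1-l)) * AA \<nu> h l) \<longlongrightarrow>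
       (\<Sum>l<j. real (j choose l) * 1 * 0^(2*(j-1-l)) * PP \<nu> l)) (at_right 0)"
      by (intro tendsto_intros ww_lim1 less.IH) (use less in auto)
    have "(\<Sum>l<j. real (j choose l) * 1 * 0^(2*(j-1-l)) * PP \<nu> l) = real j * PP \<nu> i"
      unfolding Suc by (simp add: lessThan_Suc power_0_left)
    moreover have "1 / (real j * \<nu> - real j * real j / 2) * (real j * PP \<nu> i) = PP \<nu> j"
    proof -
      have e1: "real j * \<nu> - real j * real j / 2 = real j * (\<nu> - real j / 2)" by (simp add: algebra_simps)
      have e2: "PP \<nu> j = PP \<nu> i / (\<nu> - real j / 2)" unfolding PP_def Suc by simp
      have "real j \<noteq> 0" using Suc by simp
      then show ?thesis unfolding e1 e2 by simp
    qed
    ultimately have "((\<lambda>h. h^2 / (1 - ?w h j) *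
       (\<Sum>l<j. real (j choose l) * ?w h l * h^(2*(j-1-l)) * AA \<nu> h l)) \<longlongrightarrow> PP \<nu> j) (at_right 0)"
      using tendsto_mult[OF l1 l2] by simp
    then show ?thesis using tendsto_cong[OF ev] by simp
  qed
qed



definition Fw :: "real \<Rightarrow> real \<Rightarrow> (nat \<Rightarrow> 'a \<Rightarrow> real) \<Rightarrow> nat \<Rightarrow> nat \<Rightarrow> 'a \<Rightarrow> real" where
  "Fw h q X n s \<omega> = (\<Sum>k<n. exp (h * (\<Sum>i<k. X (s+i) \<omega>)) * q ^ k)"

lemma Fw_nonneg: "q \<ge> 0 \<Longrightarrow> Fw h q X n s \<omega> \<ge> 0"
  unfolding Fw_def by (intro sum_nonneg) auto

lemma Fw_mono: "q \<ge> 0 \<Longrightarrow> Fw h q X n s \<omega> \<le> Fw h q X (Suc n) s \<omega>"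
  unfolding Fw_def by simp

lemma Fw_Suc: "Fw h q X (Suc n) s \<omega> = 1 + q * exp (h * X s \<omega>) * Fw h q X n (Suc s) \<omega>"
proof -
  have "Fw h q X (Suc n) s \<omega> = 1 + (\<Sum>k<n. exp (h * (\<Sum>i<Suc k. X (s+i) \<omega>)) * q ^ Suc k)"
    unfolding Fw_def by (subst sum.lessThan_Suc_shift) simp
  also have "(\<Sum>k<n. exp (h * (\<Sum>i<Suc k. X (s+i) \<omega>)) * q ^ Suc k) = (\<Sum>k<n. q * exp (h * X s \<omega>) * (exp (h * (\<Sum>i<k. X (Suc s + i) \<omega>)) * q ^ k))"
  proof (intro sum.cong refl)
    fix k
    have "(\<Sum>i<Suc k. X (s+i) \<omega>) = X s \<omega> + (\<Sum>i<k. X (Suc s+i) \<omega>)"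
      by (subst sum.lessThan_Suc_shift) simp
    then show "exp (h * (\<Sum>i<Suc k. X (s+i) \<omega>)) * q ^ Suc k = q * exp (h * X s \<omega>) * (exp (h * (\<Sum>i<k. X (Suc s + i) \<omega>)) * q ^ k)"
      by (simp add: distrib_left exp_add mult_ac)
  qed
  also have "\<dots> = q * exp (h * X s \<omega>) * Fw h q X n (Suc s) \<omega>"
    unfolding Fw_def by (rule sum_distrib_left[symmetric])
  finally show ?thesis .
qed

lemma Fw_pow:
  "Fw h q X (Suc n) s \<omega> ^ j = (\<Sum>l\<le>j. real (j choose l) * q^l * (exp (real l * h * X s \<omega>) * Fw h q X n (Suc s) \<omega> ^ l))"
proof -
  have "Fw h q X (Suc n) s \<omega> ^ j = (q * exp (h * X s \<omega>) * Fw h q X n (Suc s) \<omega> + 1) ^ j"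
    by (simp add: Fw_Suc add.commute)
  also have "\<dots> = (\<Sum>l\<le>j. real (j choose l) * (q * exp (h * X s \<omega>) * Fw h q X n (Suc s) \<omega>) ^ l)"
    by (simp add: binomial_ring)
  also have "\<dots> = (\<Sum>l\<le>j. real (j choose l) * q^l * (exp (real l * h * X s \<omega>) * Fw h q X n (Suc s) \<omega> ^ l))"
  proof (intro sum.cong refl)
    fix l
    have "exp (real l * h * X s \<omega>) = exp (h * X s \<omega>) ^ l"
      by (simp add: exp_of_nat_mult[symmetric] mult_ac)
    then show "real (j choose l) * (q * exp (h * X s \<omega>) * Fw h q X n (Suc s) \<omega>) ^ l = real (j choose l) * q^l * (exp (real l * h * X s \<omega>) * Fw h q X n (Suc s) \<omega> ^ l)"
      by (simp add: power_mult_distrib mult_ac)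
  qed
  finally show ?thesis .
qed

locale rw = prob_space M for M :: "'a measure" +
  fixes X :: "nat \<Rightarrow> 'a \<Rightarrow> real"
  assumes meas[measurable]: "\<And>k. X k \<in> borel_measurable M"
  and indep: "indep_vars (\<lambda>_. borel) X UNIV"
  and plus: "\<And>k. prob {\<omega> \<in> space M. X k \<omega> = 1} = 1/2"
  and minus: "\<And>k. prob {\<omega> \<in> space M. X k \<omega> = -1} = 1/2"
begin

lemma single:
  assumes f: "f \<in> borel_measurable borel" "\<And>x. f x \<ge> 0"
  shows "(\<integral>\<^sup>+\<omega>. ennreal (f (X k \<omega>)) \<partial>M) = ennreal ((f 1 + f (-1)) / 2)"
proof -
  note [measurable] = f(1)
  define A where "A = {\<omega> \<in> space M. X k \<omega> = 1}"
  define B where "B = {\<omega> \<in> space M. X k \<omega> = -1}"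
  have AB[measurable]: "A \<in> sets M" "B \<in> sets M" unfolding A_def B_def by measurable
  have disj: "A \<inter> B = {}" unfolding A_def B_def by auto
  have "prob (A \<union> B) = prob A + prob B" by (rule finite_measure_Union) (use AB disj in auto)
  also have "\<dots> = 1/2 + 1/2" unfolding A_def B_def by (simp only: plus minus)
  also have "\<dots> = 1" by simp
  finally have "AE \<omega> in M. \<omega> \<in> A \<union> B" by (rule AE_prob_1)
  then have "(\<integral>\<^sup>+\<omega>. ennreal (f (X k \<omega>)) \<partial>M) = (\<integral>\<^sup>+\<omega>. ennreal (f 1) * indicator A \<omega> + ennreal (f (-1)) * indicator B \<omega> \<partial>M)"
    by (rule nn_integral_cong_AE[OF AE_mp]) (auto simp: A_def B_def indicator_def)
  also have "\<dots> = ennreal (f 1) * emeasure M A + ennreal (f (-1)) * emeasure M B"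
    by (simp add: nn_integral_add nn_integral_cmult_indicator)
  also have "\<dots> = ennreal ((f 1 + f (-1)) / 2)"
    unfolding emeasure_eq_measure A_def B_def plus minus using f(2)
    by (simp add: add_divide_distrib divide_ennreal[symmetric] divide_ennreal_def)
  finally show ?thesis .
qed

lemma indep_prod:
  assumes f: "f \<in> borel_measurable borel" "\<And>x. f x \<ge> 0"
    and G: "G \<in> borel_measurable (PiM UNIV (\<lambda>_. borel))" "\<And>x. G x \<ge> 0"
  shows "(\<integral>\<^sup>+\<omega>. ennreal (f (X s \<omega>) * G (\<lambda>i. X (Suc s + i) \<omega>)) \<partial>M) =
    (\<integral>\<^sup>+\<omega>. ennreal (f (X s \<omega>)) \<partial>M) * (\<integral>\<^sup>+\<omega>. ennreal (G (\<lambda>i. X (Suc s + i) \<omega>)) \<partial>M)"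
proof -
  note [measurable] = f(1) G(1)
  have iv: "indep_var (PiM {s} (\<lambda>_. borel)) (\<lambda>\<omega>. restrict (\<lambda>i. X i \<omega>) {s})
      (PiM {Suc s..} (\<lambda>_. borel)) (\<lambda>\<omega>. restrict (\<lambda>i. X i \<omega>) {Suc s..})"
    by (rule indep_var_restrict[OF indep]) auto
  have m1: "(\<lambda>x. ennreal (f (x s))) \<in> borel_measurable (PiM {s} (\<lambda>_. borel))" by measurable
  have shift: "(\<lambda>x. \<lambda>i. x (Suc s + i)) \<in> measurable (PiM {Suc s..} (\<lambda>_. borel)) (PiM UNIV (\<lambda>_. borel::real measure))"
    by (rule measurable_PiM_single') (auto simp: measurable_component_singleton)
  have m2: "(\<lambda>x. ennreal (G (\<lambda>i. x (Suc s + i)))) \<in> borel_measurable (PiM {Suc s..} (\<lambda>_. borel))"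
    using measurable_comp[OF shift G(1)] by (simp add: comp_def)
  have iv2: "indep_var borel (\<lambda>\<omega>. ennreal (f (X s \<omega>))) borel (\<lambda>\<omega>. ennreal (G (\<lambda>i. X (Suc s + i) \<omega>)))"
    using indep_var_compose[OF iv m1 m2] by (simp add: comp_def)
  have cb: "case_bool borel borel = (\<lambda>_::bool. borel)" by (rule ext) (simp split: bool.split)
  define F1 where "F1 = (\<lambda>\<omega>. ennreal (f (X s \<omega>)))"
  define F2 where "F2 = (\<lambda>\<omega>. ennreal (G (\<lambda>i. X (Suc s + i) \<omega>)))"
  have iv3: "indep_vars (\<lambda>_. borel) (case_bool F1 F2) UNIV"
    using iv2 unfolding indep_var_def cb F1_def F2_def .
  have "(\<integral>\<^sup>+\<omega>. (\<Prod>b\<in>UNIV. case_bool F1 F2 b \<omega>) \<partial>M) =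
      (\<Prod>b\<in>UNIV. \<integral>\<^sup>+\<omega>. case_bool F1 F2 b \<omega> \<partial>M)"
    using indep_vars_nn_integral[of UNIV "case_bool F1 F2"] iv3 by auto
  then show ?thesis using f(2) G(2) by (simp add: UNIV_bool mult.commute F1_def F2_def ennreal_mult)
qed

lemma moment: "q \<ge> 0 \<Longrightarrow> (\<integral>\<^sup>+\<omega>. ennreal (Fw h q X n s \<omega> ^ j) \<partial>M) = ennreal (cc h q n j)"
proof (induction n arbitrary: s j)
  case 0
  then show ?case by (simp add: Fw_def emeasure_space_1)
next
  case (Suc n)
  note q = Suc.prems
  let ?F = "\<lambda>l \<omega>. exp (real l * h * X s \<omega>) * Fw h q X n (Suc s) \<omega> ^ l"
  have Fm[measurable]: "(\<lambda>\<omega>. Fw h q X n s' \<omega>) \<in> borel_measurable M" for s' unfolding Fw_def by measurable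
  have "(\<integral>\<^sup>+\<omega>. ennreal (Fw h q X (Suc n) s \<omega> ^ j) \<partial>M) =
     (\<integral>\<^sup>+\<omega>. (\<Sum>l\<le>j. ennreal (real (j choose l) * q^l) * ennreal (?F l \<omega>)) \<partial>M)"
    unfolding Fw_pow using q Fw_nonneg[OF q]
    by (intro nn_integral_cong, subst sum_ennreal[symmetric]) (auto simp: ennreal_mult'[symmetric] mult.assoc intro!: mult_nonneg_nonneg zero_le_power)
  also have "\<dots> = (\<Sum>l\<le>j. ennreal (real (j choose l) * q^l) * (\<integral>\<^sup>+\<omega>. ennreal (?F l \<omega>) \<partial>M))"
    by (simp add: nn_integral_sum nn_integral_cmult)
  also have "\<dots> = (\<Sum>l\<le>j. ennreal (real (j choose l) * q^l) * (ennreal (cosh (real l * h)) * ennreal (cc h q n l)))"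
  proof (intro sum.cong refl arg_cong2[where f="(*)"])
    fix l
    define G where "G = (\<lambda>y::nat\<Rightarrow>real. (\<Sum>k<n. exp (h * (\<Sum>i<k. y i)) * q ^ k) ^ l)"
    have G[measurable]: "G \<in> borel_measurable (PiM UNIV (\<lambda>_. borel))"
      unfolding G_def by measurable
    have G0: "G y \<ge> 0" for y unfolding G_def using q by (auto intro!: sum_nonneg zero_le_power)
    have GF: "G (\<lambda>i. X (Suc s + i) \<omega>) = Fw h q X n (Suc s) \<omega> ^ l" for \<omega> unfolding G_def Fw_def ..
    have "(\<integral>\<^sup>+\<omega>. ennreal (?F l \<omega>) \<partial>M) = (\<integral>\<^sup>+\<omega>. ennreal ((\<lambda>x. exp (real l * h * x)) (X s \<omega>) * G (\<lambda>i. X (Suc s + i) \<omega>)) \<partial>M)"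
      unfolding GF ..
    also have "\<dots> = (\<integral>\<^sup>+\<omega>. ennreal ((\<lambda>x. exp (real l * h * x)) (X s \<omega>)) \<partial>M) * (\<integral>\<^sup>+\<omega>. ennreal (G (\<lambda>i. X (Suc s + i) \<omega>)) \<partial>M)"
      by (rule indep_prod) (auto simp: G0)
    also have "\<dots> = ennreal (cosh (real l * h)) * ennreal (cc h q n l)"
      unfolding GF Suc.IH[OF q] by (subst single) (auto simp: cosh_field_def)
    finally show "(\<integral>\<^sup>+\<omega>. ennreal (?F l \<omega>) \<partial>M) = ennreal (cosh (real l * h)) * ennreal (cc h q n l)" .
  qed
  also have "\<dots> = ennreal (cc h q (Suc n) j)"
    using q cc_nonneg[OF q]
    by (simp add: ennreal_mult'[symmetric] ww_def mult_ac sum_nonneg ww_nonneg)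
  finally show ?case .
qed

end



lemma SUP_power_ennreal:
  fixes f :: "nat \<Rightarrow> ennreal"
  assumes inc: "incseq f"
  shows "(SUP n. f n) ^ p = (SUP n. f n ^ p)"
proof (induction p)
  case 0
  then show ?case by simp
next
  case (Suc p)
  have "(SUP n. f n) ^ Suc p = (SUP i. f i) * (SUP j. f j ^ p)" by (simp add: Suc)
  also have "\<dots> = (SUP i. SUP j. f i * f j ^ p)"
    by (simp add: SUP_mult_left_ennreal SUP_mult_right_ennreal) (rule SUP_commute)
  also have "\<dots> = (SUP n. f n ^ Suc p)"
  proof (rule antisym)
    show "(SUP i. SUP j. f i * f j ^ p) \<le> (SUP n. f n ^ Suc p)"
    proof (intro SUP_least)
      fix i j
      have "f i * f j ^ p \<le> f (max i j) * f (max i j) ^ p"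
        using inc by (intro mult_mono power_mono_ennreal) (auto simp: incseq_def)
      also have "\<dots> = f (max i j) ^ Suc p" by simp
      also have "\<dots> \<le> (SUP n. f n ^ Suc p)" by (rule SUP_upper) simp
      finally show "f i * f j ^ p \<le> (SUP n. f n ^ Suc p)" .
    qed
    show "(SUP n. f n ^ Suc p) \<le> (SUP i. SUP j. f i * f j ^ p)"
    proof (intro SUP_least)
      fix n
      have "f n ^ Suc p = f n * f n ^ p" by simp
      also have "\<dots> \<le> (SUP j. f n * f j ^ p)" by (rule SUP_upper) simp
      also have "\<dots> \<le> (SUP i. SUP j. f i * f j ^ p)" by (rule SUP_upper) simp
      finally show "f n ^ Suc p \<le> (SUP i. SUP j. f i * f j ^ p)" .
    qed
  qed
  finally show ?case .
qed

context rw begin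

lemma moment_Y:
  assumes q: "q \<ge> 0" and c: "c \<ge> 0"
  shows "(\<integral>\<^sup>+\<omega>. (\<Sum>k. ennreal (c * (exp (h * (\<Sum>i<k. X i \<omega>)) * q^k))) ^ p \<partial>M) =
     (SUP n. ennreal (c^p * cc h q n p))"
proof -
  have Fm[measurable]: "(\<lambda>\<omega>. Fw h q X n s' \<omega>) \<in> borel_measurable M" for n s' unfolding Fw_def by measurable
  have eq: "(\<Sum>k. ennreal (c * (exp (h * (\<Sum>i<k. X i \<omega>)) * q^k))) = (SUP n. ennreal (c * Fw h q X n 0 \<omega>))" for \<omega>
    unfolding suminf_eq_SUP Fw_def using q c
    by (subst sum_ennreal) (auto simp: sum_distrib_left)
  have inc: "incseq (\<lambda>n. ennreal (c * Fw h q X n 0 \<omega>))" for \<omega>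
    using q c by (intro incseq_SucI ennreal_leI mult_left_mono Fw_mono) auto
  have "(\<integral>\<^sup>+\<omega>. (\<Sum>k. ennreal (c * (exp (h * (\<Sum>i<k. X i \<omega>)) * q^k))) ^ p \<partial>M) =
      (\<integral>\<^sup>+\<omega>. (SUP n. ennreal ((c * Fw h q X n 0 \<omega>) ^ p)) \<partial>M)"
    unfolding eq SUP_power_ennreal[OF inc] using q c Fw_nonneg[OF q]
    by (intro nn_integral_cong SUP_cong refl ennreal_power mult_nonneg_nonneg) auto
  also have "\<dots> = (SUP n. \<integral>\<^sup>+\<omega>. ennreal ((c * Fw h q X n 0 \<omega>) ^ p) \<partial>M)"
  proof (rule nn_integral_monotone_convergence_SUP)
    show "incseq (\<lambda>n \<omega>. ennreal ((c * Fw h q X n 0 \<omega>) ^ p))"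
    proof (intro incseq_SucI le_funI ennreal_leI power_mono mult_left_mono Fw_mono q c)
      fix n \<omega> show "0 \<le> c * Fw h q X n 0 \<omega>" by (rule mult_nonneg_nonneg[OF c Fw_nonneg[OF q]])
    qed
  qed simp
  also have "\<dots> = (SUP n. ennreal (c^p * cc h q n p))"
  proof (intro SUP_cong refl)
    fix n
    have "(\<integral>\<^sup>+\<omega>. ennreal ((c * Fw h q X n 0 \<omega>) ^ p) \<partial>M) = (\<integral>\<^sup>+\<omega>. ennreal (c^p) * ennreal (Fw h q X n 0 \<omega> ^ p) \<partial>M)"
      using c by (intro nn_integral_cong) (simp add: power_mult_distrib ennreal_mult Fw_nonneg[OF q])
    also have "\<dots> = ennreal (c^p) * ennreal (cc h q n p)"
      by (simp add: nn_integral_cmult moment[OF q])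
    also have "\<dots> = ennreal (c^p * cc h q n p)" using c by (simp add: ennreal_mult cc_nonneg[OF q])
    finally show "(\<integral>\<^sup>+\<omega>. ennreal ((c * Fw h q X n 0 \<omega>) ^ p) \<partial>M) = ennreal (c^p * cc h q n p)" .
  qed
  finally show ?thesis .
qed

end

lemma SUP_cc:
  assumes q: "q \<ge> 0" and c: "c \<ge> 0" and w: "\<And>l. 1 \<le> l \<Longrightarrow> l \<le> p \<Longrightarrow> ww h q l < 1"
  shows "(SUP n. ennreal (c * cc h q n p)) = ennreal (c * Lc h q p)"
proof -
  have "(\<lambda>n. ennreal (c * cc h q n p)) \<longlonglongrightarrow> (SUP n. ennreal (c * cc h q n p))"
    using q c by (intro LIMSEQ_SUP incseq_SucI ennreal_leI mult_left_mono cc_mono) auto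
  moreover have "(\<lambda>n. ennreal (c * cc h q n p)) \<longlonglongrightarrow> ennreal (c * Lc h q p)"
    by (intro tendsto_ennrealI tendsto_mult_left cc_conv[OF q w]) auto
  ultimately show ?thesis using LIMSEQ_unique by blast
qed



theorem lemma2:
  fixes \<nu> :: real and p :: nat
    and M :: "nat \<Rightarrow> 'a measure"
    and X :: "nat \<Rightarrow> nat \<Rightarrow> 'a \<Rightarrow> real"
  assumes nu_pos: "\<nu> > 0"
    and p_pos: "p \<ge> 1"
    and p_nu: "real p / 2 < \<nu>"
    and prob: "\<And>m. prob_space (M m)"
    and meas: "\<And>m k. X m k \<in> borel_measurable (M m)"
    and indep: "\<And>m. prob_space.indep_vars (M m) (\<lambda>_. borel) (X m) UNIV"
    and plus: "\<And>m k. measure (M m) {\<omega> \<in> space (M m). X m k \<omega> = 1} = 1/2"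
    and minus: "\<And>m k. measure (M m) {\<omega> \<in> space (M m). X m k \<omega> = -1} = 1/2"
  shows "(\<lambda>m. \<integral>\<^sup>+ \<omega>. (Ysum \<nu> m (X m) \<omega>) ^ p \<partial>(M m))
           \<longlonglongrightarrow> ennreal (1 / (\<Prod>k=1..p. (\<nu> - real k / 2)))
       \<and> (\<Prod>k=1..p. (\<nu> - real k / 2)) > 0"
proof
  define h where "h = (\<lambda>m::nat. 2 powr (- real m))"
  define q where "q = (\<lambda>m. exp (-\<nu> * (h m)^2))"
  have hpos: "h m > 0" for m unfolding h_def by simp
  have key: "(\<integral>\<^sup>+\<omega>. Ysum \<nu> m (X m) \<omega> ^ p \<partial>M m) = (SUP n. ennreal (((h m)^2)^p * cc (h m) (q m) n p))" for m
  proof -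
    interpret rw "M m" "X m"
      by (intro rw.intro rw_axioms.intro prob meas indep plus minus)
    have h2: "2 powr (-2*real m) = (h m)^2" unfolding h_def
      by (simp add: power2_eq_square powr_add[symmetric])
    have pt: "2 powr (-2*real m) * exp (2 powr (-real m) * walk (X m) k \<omega> - \<nu> * real k * 2 powr (-2*real m)) =
        (h m)^2 * (exp (h m * (\<Sum>i<k. X m i \<omega>)) * q m ^ k)" for k \<omega>
    proof -
      have "q m ^ k = exp (real k * (-\<nu> * (h m)^2))" unfolding q_def by (rule exp_of_nat_mult[symmetric])
      moreover have hm: "2 powr (-real m) = h m" by (simp add: h_def)
      ultimately show ?thesis unfolding h2 walk_def hm
        by (simp add: exp_add[symmetric] algebra_simps)
    qed
    have Y: "Ysum \<nu> m (X m) \<omega> = (\<Sum>k. ennreal ((h m)^2 * (exp (h m * (\<Sum>i<k. X m i \<omega>)) * q m ^ k)))" for \<omega>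
      unfolding Ysum_def pt ..
    show ?thesis unfolding Y by (rule moment_Y) (auto simp: q_def)
  qed
  have hlim: "filterlim h (at_right 0) sequentially"
  proof (rule tendsto_imp_filterlim_at_right)
    have "h = (\<lambda>m. inverse (2 ^ m))" unfolding h_def
      by (rule ext) (simp add: powr_minus powr_realpow)
    then show "(h \<longlongrightarrow> 0) sequentially" using LIMSEQ_inverse_realpow_zero[of 2] by simp
    show "eventually (\<lambda>m. h m > 0) sequentially" using hpos by simp
  qed
  have ev: "eventually (\<lambda>m. \<forall>l\<in>{1..p}. ww (h m) (q m) l < 1) sequentially"
    using hlim ev_w[OF p_nu] unfolding filterlim_iff q_def by blast
  have eq: "eventually (\<lambda>m. (\<integral>\<^sup>+\<omega>. Ysum \<nu> m (X m) \<omega> ^ p \<partial>M m) = ennreal (AA \<nu> (h m) p)) sequentially"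
    using ev
  proof eventually_elim
    case (elim m)
    have "(\<integral>\<^sup>+\<omega>. Ysum \<nu> m (X m) \<omega> ^ p \<partial>M m) = ennreal (((h m)^2)^p * Lc (h m) (q m) p)"
      unfolding key by (rule SUP_cc) (use elim in \<open>auto simp: q_def\<close>)
    then show ?case unfolding AA_def q_def by (simp add: power_mult)
  qed
  have lim: "(\<lambda>m. AA \<nu> (h m) p) \<longlonglongrightarrow> PP \<nu> p"
    using filterlim_compose[OF AA_lim[OF p_nu order.refl] hlim] .
  show "(\<lambda>m. \<integral>\<^sup>+ \<omega>. (Ysum \<nu> m (X m) \<omega>) ^ p \<partial>(M m)) \<longlonglongrightarrow> ennreal (1 / (\<Prod>k=1..p. (\<nu> - real k / 2)))"
    unfolding tendsto_cong[OF eq] using tendsto_ennrealI[OF lim] by (simp add: PP_def)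
next
  show "(\<Prod>k=1..p. (\<nu> - real k / 2)) > 0"
  proof (rule prod_pos)
    fix k assume "k \<in> {1..p}"
    then have "real k / 2 \<le> real p / 2" by auto
    then show "\<nu> - real k / 2 > 0" using p_nu by linarith
  qed
qed

end
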